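(* Let $A$ be a minimal $n$-state nondeterministic finite automaton accepting a non-empty language that is prefix-free, suffix-free, or infix-free. Then the minimal deterministic finite automaton accepting $L(A)$ has at least $n+1$ states.
   Context: NFAs have a single initial state and a transition function $\delta:Q\times\Sigma\to 2^Q$ that may map to the empty set (no sink state is needed or counted); DFAs are complete, so a sink state is counted. A minimal $n$-state NFA is an NFA with $n$ states such that no NFA with fewer states accepts the same language. With $\Sigma^+=\Sigma^*\setminus\{\lambda\}$: $L\subseteq\Sigma^*$ is prefix-free if $y\in L$ implies $yz\notin L$ for all $z\in\Sigma^+$; suffix-free if $y\in L$ implies $xy\notin L$ for all $x\in\Sigma^+$; infix-free if $y\in L$ implies $xyz\notin L$ for all $x,z\in\Sigma^*$ with $xz\in\Sigma^+$. *)

theory Defs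
  imports Main
begin

(* States are natural numbers; every finite automaton is isomorphic to one
   with nat states, so quantifying over such automata covers all automata. *)

record 'a nfa =
  nfa_alphabet :: "'a set"
  nfa_states :: "nat set"
  nfa_init :: nat
  nfa_delta :: "nat \<Rightarrow> 'a \<Rightarrow> nat set"
  nfa_final :: "nat set"

definition wf_nfa :: "'a nfa \<Rightarrow> bool" where
  "wf_nfa A \<longleftrightarrow> finite (nfa_alphabet A) \<and> finite (nfa_states A)
     \<and> nfa_init A \<in> nfa_states A \<and> nfa_final A \<subseteq> nfa_states A
     \<and> (\<forall>q\<in>nfa_states A. \<forall>a\<in>nfa_alphabet A. nfa_delta A q a \<subseteq> nfa_states A)"

fun nfa_run :: "'a nfa \<Rightarrow> nat set \<Rightarrow> 'a list \<Rightarrow> nat set" where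
  "nfa_run A S [] = S"
| "nfa_run A S (a # w) = nfa_run A (\<Union>q\<in>S. nfa_delta A q a) w"

definition nfa_lang :: "'a nfa \<Rightarrow> 'a list set" where
  "nfa_lang A = {w \<in> lists (nfa_alphabet A). nfa_run A {nfa_init A} w \<inter> nfa_final A \<noteq> {}}"

record 'a dfa =
  dfa_alphabet :: "'a set"
  dfa_states :: "nat set"
  dfa_init :: nat
  dfa_delta :: "nat \<Rightarrow> 'a \<Rightarrow> nat"
  dfa_final :: "nat set"

definition wf_dfa :: "'a dfa \<Rightarrow> bool" where
  "wf_dfa D \<longleftrightarrow> finite (dfa_alphabet D) \<and> finite (dfa_states D)
     \<and> dfa_init D \<in> dfa_states D \<and> dfa_final D \<subseteq> dfa_states D
     \<and> (\<forall>q\<in>dfa_states D. \<forall>a\<in>dfa_alphabet D. dfa_delta D q a \<in> dfa_states D)"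

fun dfa_run :: "'a dfa \<Rightarrow> nat \<Rightarrow> 'a list \<Rightarrow> nat" where
  "dfa_run D q [] = q"
| "dfa_run D q (a # w) = dfa_run D (dfa_delta D q a) w"

definition dfa_lang :: "'a dfa \<Rightarrow> 'a list set" where
  "dfa_lang D = {w \<in> lists (dfa_alphabet D). dfa_run D (dfa_init D) w \<in> dfa_final D}"

definition minimal_nfa :: "'a nfa \<Rightarrow> nat \<Rightarrow> bool" where
  "minimal_nfa A n \<longleftrightarrow> wf_nfa A \<and> card (nfa_states A) = n
     \<and> (\<forall>B. wf_nfa B \<and> nfa_alphabet B = nfa_alphabet A \<and> nfa_lang B = nfa_lang A
            \<longrightarrow> n \<le> card (nfa_states B))"

definition min_dfa_states :: "'a set \<Rightarrow> 'a list set \<Rightarrow> nat" where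
  "min_dfa_states \<Sigma> L = (LEAST k. \<exists>D. wf_dfa D \<and> dfa_alphabet D = \<Sigma> \<and> dfa_lang D = L
                                       \<and> card (dfa_states D) = k)"

definition prefix_free :: "'a list set \<Rightarrow> bool" where
  "prefix_free L \<longleftrightarrow> (\<forall>y z. y \<in> L \<and> z \<noteq> [] \<longrightarrow> y @ z \<notin> L)"

definition suffix_free :: "'a list set \<Rightarrow> bool" where
  "suffix_free L \<longleftrightarrow> (\<forall>x y. y \<in> L \<and> x \<noteq> [] \<longrightarrow> x @ y \<notin> L)"

definition infix_free :: "'a list set \<Rightarrow> bool" where
  "infix_free L \<longleftrightarrow> (\<forall>x y z. y \<in> L \<and> x @ z \<noteq> [] \<longrightarrow> x @ y @ z \<notin> L)"

end

theory Submission
  imports Defs "HOL-Library.Countable"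
begin

lemma dfa_run_append: "dfa_run D q (u @ v) = dfa_run D (dfa_run D q u) v"
  by (induction u arbitrary: q) auto

lemma dfa_run_states:
  "wf_dfa D \<Longrightarrow> q \<in> dfa_states D \<Longrightarrow> w \<in> lists (dfa_alphabet D) \<Longrightarrow> dfa_run D q w \<in> dfa_states D"
  by (induction w arbitrary: q) (auto simp: wf_dfa_def)

lemma nfa_run_states:
  "wf_nfa A \<Longrightarrow> S \<subseteq> nfa_states A \<Longrightarrow> w \<in> lists (nfa_alphabet A) \<Longrightarrow> nfa_run A S w \<subseteq> nfa_states A"
proof (induction w arbitrary: S)
  case Nil then show ?case by simp
next
  case (Cons a w)
  have "(\<Union>q\<in>S. nfa_delta A q a) \<subseteq> nfa_states A"
    using Cons.prems unfolding wf_nfa_def by (intro UN_least) (auto simp: subset_iff)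
  then show ?case using Cons by simp
qed

definition enc :: "nat set \<Rightarrow> nat" where
  "enc S = to_nat (sorted_list_of_set S)"

lemma enc_inj: "finite S \<Longrightarrow> finite T \<Longrightarrow> enc S = enc T \<Longrightarrow> S = T"
  unfolding enc_def by (metis sorted_list_of_set.set_sorted_key_list_of_set to_nat_split)

lemma enc_dec: "finite S \<Longrightarrow> set (from_nat (enc S)) = S"
  unfolding enc_def by simp

definition subset_dfa :: "'a nfa \<Rightarrow> 'a dfa" where
  "subset_dfa A = \<lparr> dfa_alphabet = nfa_alphabet A,
     dfa_states = enc ` Pow (nfa_states A),
     dfa_init = enc {nfa_init A},
     dfa_delta = (\<lambda>q a. enc (\<Union>s\<in>set (from_nat q) \<inter> nfa_states A. nfa_delta A s a)),
     dfa_final = enc ` {S \<in> Pow (nfa_states A). S \<inter> nfa_final A \<noteq> {}} \<rparr>"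

lemma subset_run:
  assumes "wf_nfa A" 
  shows "S \<subseteq> nfa_states A \<Longrightarrow> w \<in> lists (nfa_alphabet A) \<Longrightarrow>
     dfa_run (subset_dfa A) (enc S) w = enc (nfa_run A S w)"
proof (induction w arbitrary: S)
  case Nil then show ?case by simp
next
  case (Cons a w)
  have fin: "finite S" using Cons.prems assms finite_subset unfolding wf_nfa_def by (meson finite_subset)
  have sub: "(\<Union>q\<in>S. nfa_delta A q a) \<subseteq> nfa_states A"
    using Cons.prems assms unfolding wf_nfa_def by (intro UN_least) (auto simp: subset_iff)
  have "dfa_delta (subset_dfa A) (enc S) a = enc (\<Union>q\<in>S. nfa_delta A q a)"
    using Cons.prems fin by (simp add: subset_dfa_def enc_dec Int_absorb2)
  then show ?case using Cons sub by simp
qed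

lemma subset_dfa_ok:
  assumes "wf_nfa A"
  shows "wf_dfa (subset_dfa A) \<and> dfa_alphabet (subset_dfa A) = nfa_alphabet A
    \<and> dfa_lang (subset_dfa A) = nfa_lang A"
proof -
  have finst: "finite (nfa_states A)" using assms unfolding wf_nfa_def by simp
  have wf: "wf_dfa (subset_dfa A)"
    using assms finst unfolding wf_dfa_def wf_nfa_def subset_dfa_def
    by (auto intro!: imageI)
  have lang: "dfa_lang (subset_dfa A) = nfa_lang A"
  proof (intro set_eqI iffI)
    fix w assume w: "w \<in> dfa_lang (subset_dfa A)"
    have wl: "w \<in> lists (nfa_alphabet A)" using w by (simp add: dfa_lang_def subset_dfa_def)
    have i: "{nfa_init A} \<subseteq> nfa_states A" using assms by (simp add: wf_nfa_def)
    have r: "dfa_run (subset_dfa A) (dfa_init (subset_dfa A)) w = enc (nfa_run A {nfa_init A} w)"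
      using subset_run[OF assms i wl] by (simp add: subset_dfa_def)
    have rs: "nfa_run A {nfa_init A} w \<subseteq> nfa_states A" using nfa_run_states[OF assms i wl] .
    from w r obtain T where T: "T \<subseteq> nfa_states A" "T \<inter> nfa_final A \<noteq> {}"
      "enc (nfa_run A {nfa_init A} w) = enc T"
      by (auto simp: dfa_lang_def subset_dfa_def)
    then have "T = nfa_run A {nfa_init A} w"
      using enc_inj finst rs finite_subset by metis
    then show "w \<in> nfa_lang A" using T wl by (simp add: nfa_lang_def)
  next
    fix w assume w: "w \<in> nfa_lang A"
    have wl: "w \<in> lists (nfa_alphabet A)" using w by (simp add: nfa_lang_def)
    have i: "{nfa_init A} \<subseteq> nfa_states A" using assms by (simp add: wf_nfa_def)
    have r: "dfa_run (subset_dfa A) (dfa_init (subset_dfa A)) w = enc (nfa_run A {nfa_init A} w)"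
      using subset_run[OF assms i wl] by (simp add: subset_dfa_def)
    have rs: "nfa_run A {nfa_init A} w \<subseteq> nfa_states A" using nfa_run_states[OF assms i wl] .
    show "w \<in> dfa_lang (subset_dfa A)"
      using w wl r rs by (auto simp: dfa_lang_def subset_dfa_def nfa_lang_def)
  qed
  show ?thesis using wf lang by (simp add: subset_dfa_def)
qed

definition rem_nfa :: "'a dfa \<Rightarrow> nat \<Rightarrow> 'a nfa" where
  "rem_nfa D p = \<lparr> nfa_alphabet = dfa_alphabet D, nfa_states = dfa_states D - {p},
     nfa_init = dfa_init D,
     nfa_delta = (\<lambda>q a. {dfa_delta D q a} \<inter> (dfa_states D - {p})),
     nfa_final = dfa_final D - {p} \<rparr>"

lemma rem_run_sub: "nfa_run (rem_nfa D p) S w \<subseteq> (\<lambda>q. dfa_run D q w) ` S"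
proof (induction w arbitrary: S)
  case Nil then show ?case by simp
next
  case (Cons a w)
  have "nfa_run (rem_nfa D p) S (a # w)
     = nfa_run (rem_nfa D p) (\<Union>q\<in>S. {dfa_delta D q a} \<inter> (dfa_states D - {p})) w"
    by (simp add: rem_nfa_def)
  also have "\<dots> \<subseteq> (\<lambda>q. dfa_run D q w) ` (\<Union>q\<in>S. {dfa_delta D q a} \<inter> (dfa_states D - {p}))"
    by (rule Cons.IH)
  also have "\<dots> \<subseteq> (\<lambda>q. dfa_run D q (a # w)) ` S" by auto
  finally show ?case .
qed

lemma rem_run_acc:
  assumes "wf_dfa D" and dead: "\<forall>z\<in>lists (dfa_alphabet D). dfa_run D p z \<notin> dfa_final D"
  shows "q \<in> dfa_states D \<Longrightarrow> q \<noteq> p \<Longrightarrow> w \<in> lists (dfa_alphabet D) \<Longrightarrow>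
     dfa_run D q w \<in> dfa_final D \<Longrightarrow> dfa_run D q w \<in> nfa_run (rem_nfa D p) {q} w"
proof (induction w arbitrary: q)
  case Nil then show ?case by simp
next
  case (Cons a w)
  let ?q = "dfa_delta D q a"
  have qs: "?q \<in> dfa_states D" using Cons.prems assms(1) by (auto simp: wf_dfa_def)
  have qp: "?q \<noteq> p" using Cons.prems dead by auto
  have "nfa_run (rem_nfa D p) {q} (a # w) = nfa_run (rem_nfa D p) {?q} w"
    using qs qp by (simp add: rem_nfa_def)
  then show ?case using Cons.IH[OF qs qp] Cons.prems by simp
qed

lemma rem_ok:
  assumes "wf_dfa D" "p \<in> dfa_states D"
    and dead: "\<forall>z\<in>lists (dfa_alphabet D). dfa_run D p z \<notin> dfa_final D"
    and "dfa_init D \<noteq> p"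
  shows "wf_nfa (rem_nfa D p) \<and> nfa_alphabet (rem_nfa D p) = dfa_alphabet D
     \<and> nfa_lang (rem_nfa D p) = dfa_lang D
     \<and> card (nfa_states (rem_nfa D p)) = card (dfa_states D) - 1"
proof -
  have wf: "wf_nfa (rem_nfa D p)" using assms unfolding wf_nfa_def wf_dfa_def rem_nfa_def by auto
  have lang: "nfa_lang (rem_nfa D p) = dfa_lang D"
  proof (intro set_eqI iffI)
    fix w assume w: "w \<in> nfa_lang (rem_nfa D p)"
    then obtain r where r: "r \<in> nfa_run (rem_nfa D p) {dfa_init D} w" "r \<in> dfa_final D"
      by (auto simp: nfa_lang_def rem_nfa_def)
    then have "r = dfa_run D (dfa_init D) w" using rem_run_sub by fastforce
    then show "w \<in> dfa_lang D" using r w by (auto simp: nfa_lang_def rem_nfa_def dfa_lang_def)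
  next
    fix w assume w: "w \<in> dfa_lang D"
    have i: "dfa_init D \<in> dfa_states D" using assms(1) by (simp add: wf_dfa_def)
    have "dfa_run D (dfa_init D) w \<in> nfa_run (rem_nfa D p) {dfa_init D} w"
      using rem_run_acc[OF assms(1) dead i assms(4)] w by (simp add: dfa_lang_def)
    moreover have "dfa_run D (dfa_init D) w \<noteq> p" using w dead[rule_format, of "[]"] by (auto simp: dfa_lang_def)
    ultimately show "w \<in> nfa_lang (rem_nfa D p)" using w
      by (auto simp: nfa_lang_def rem_nfa_def dfa_lang_def)
  qed
  show ?thesis using wf lang assms(2) by (simp add: rem_nfa_def)
qed

theorem mainTheorem4:
  fixes A :: "'a nfa" and n :: nat
  assumes "nfa_alphabet A \<noteq> {}"
    and "minimal_nfa A n"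
    and "nfa_lang A \<noteq> {}"
    and "prefix_free (nfa_lang A) \<or> suffix_free (nfa_lang A) \<or> infix_free (nfa_lang A)"
  shows "n + 1 \<le> min_dfa_states (nfa_alphabet A) (nfa_lang A)"
proof -
  let ?L = "nfa_lang A" and ?S = "nfa_alphabet A"
  let ?P = "\<lambda>k. \<exists>D. wf_dfa D \<and> dfa_alphabet D = ?S \<and> dfa_lang D = ?L \<and> card (dfa_states D) = k"
  have wfA: "wf_nfa A" using assms(2) by (simp add: minimal_nfa_def)
  have "?P (card (dfa_states (subset_dfa A)))" using subset_dfa_ok[OF wfA] by blast
  then have "?P (Least ?P)" by (rule LeastI)
  then obtain D where D: "wf_dfa D" "dfa_alphabet D = ?S" "dfa_lang D = ?L"
    "card (dfa_states D) = min_dfa_states ?S ?L"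
    unfolding min_dfa_states_def by blast
  obtain a where a: "a \<in> ?S" using assms(1) by blast
  obtain w where w: "w \<in> ?L" using assms(3) by blast
  have ini: "dfa_init D \<in> dfa_states D" using D(1) by (simp add: wf_dfa_def)
  have fin: "finite (dfa_states D)" using D(1) by (simp add: wf_dfa_def)
  have "\<exists>p \<in> dfa_states D. \<forall>z\<in>lists (dfa_alphabet D). dfa_run D p z \<notin> dfa_final D"
  proof (cases "prefix_free ?L")
    case True
    let ?p = "dfa_delta D (dfa_run D (dfa_init D) w) a"
    have wl: "w \<in> lists ?S" using w by (simp add: nfa_lang_def)
    have "dfa_run D (dfa_init D) w \<in> dfa_states D" using dfa_run_states[OF D(1) ini] wl D(2) by simp
    then have ps: "?p \<in> dfa_states D" using D(1,2) a by (simp add: wf_dfa_def)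
    have "\<forall>z\<in>lists (dfa_alphabet D). dfa_run D ?p z \<notin> dfa_final D"
    proof (intro ballI notI)
      fix z assume z: "z \<in> lists (dfa_alphabet D)" "dfa_run D ?p z \<in> dfa_final D"
      then have "w @ (a # z) \<in> dfa_lang D" using wl a D(2)
        by (simp add: dfa_lang_def dfa_run_append)
      then show False using True w D(3) unfolding prefix_free_def by blast
    qed
    then show ?thesis using ps by blast
  next
    case False
    have sf: "suffix_free ?L"
    proof -
      have "\<not> infix_free ?L" using False unfolding infix_free_def prefix_free_def
        by (metis append_Nil)
      then show ?thesis using False assms(4) by blast
    qed
    let ?f = "\<lambda>i. dfa_run D (dfa_init D) (replicate i a)"
    have img: "?f ` {0..card (dfa_states D)} \<subseteq> dfa_states D"
      using dfa_run_states[OF D(1) ini] a D(2) by (auto simp: in_lists_conv_set)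
    have "\<not> inj_on ?f {0..card (dfa_states D)}"
    proof
      assume "inj_on ?f {0..card (dfa_states D)}"
      then have "card {0..card (dfa_states D)} \<le> card (dfa_states D)"
        using card_inj_on_le[OF _ img fin] by blast
      then show False by simp
    qed
    then obtain i j where ij: "i < j" "?f i = ?f j"
      unfolding inj_on_def by (metis linorder_neqE_nat)
    let ?p = "?f i"
    have "replicate i a \<in> lists (dfa_alphabet D)" unfolding D(2) using a by (induction i) auto
    then have ps: "?p \<in> dfa_states D" by (rule dfa_run_states[OF D(1) ini])
    have "\<forall>z\<in>lists (dfa_alphabet D). dfa_run D ?p z \<notin> dfa_final D"
    proof (intro ballI notI)
      fix z assume z: "z \<in> lists (dfa_alphabet D)" "dfa_run D ?p z \<in> dfa_final D"
      have rl: "\<And>k. replicate k a \<in> lists (dfa_alphabet D)" unfolding D(2) using a subgoal for k by (induction k) auto done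
      have y: "replicate i a @ z \<in> dfa_lang D" using z(2) rl[of i] z(1)
        unfolding dfa_lang_def by (simp add: dfa_run_append)
      have e: "dfa_run D (dfa_init D) (replicate j a @ z) = dfa_run D ?p z"
        unfolding dfa_run_append ij(2) ..
      have "replicate j a @ z \<in> dfa_lang D" using z(2) rl[of j] z(1) e
        unfolding dfa_lang_def by simp
      moreover have "replicate j a @ z = replicate (j - i) a @ (replicate i a @ z)"
        using ij(1) by (metis append.assoc le_add_diff_inverse2 less_imp_le replicate_add)
      moreover have "replicate (j - i) a \<noteq> []" using ij(1) by simp
      ultimately show False using sf y D(3) unfolding suffix_free_def by metis
    qed
    then show ?thesis using ps by blast
  qed
  then obtain p where p: "p \<in> dfa_states D" "\<forall>z\<in>lists (dfa_alphabet D). dfa_run D p z \<notin> dfa_final D"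
    by blast
  have wD: "w \<in> dfa_lang D" using w D(3) by simp
  then have wD1: "dfa_run D (dfa_init D) w \<in> dfa_final D" and wD2: "w \<in> lists (dfa_alphabet D)"
    unfolding dfa_lang_def by auto
  have "dfa_init D \<noteq> p"
  proof
    assume "dfa_init D = p"
    then show False using p(2) wD1 wD2 by blast
  qed
  note R = rem_ok[OF D(1) p(1) p(2) this]
  have minB: "\<And>B. wf_nfa B \<Longrightarrow> nfa_alphabet B = ?S \<Longrightarrow> nfa_lang B = ?L \<Longrightarrow> n \<le> card (nfa_states B)"
    using assms(2) unfolding minimal_nfa_def by blast
  from R have r1: "wf_nfa (rem_nfa D p)" and r2: "nfa_alphabet (rem_nfa D p) = dfa_alphabet D"
    and r3: "nfa_lang (rem_nfa D p) = dfa_lang D"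
    and r4: "card (nfa_states (rem_nfa D p)) = card (dfa_states D) - 1" by blast+
  have r2': "nfa_alphabet (rem_nfa D p) = ?S" using r2 D(2) by (rule trans)
  have r3': "nfa_lang (rem_nfa D p) = ?L" using r3 D(3) by (rule trans)
  have "n \<le> card (nfa_states (rem_nfa D p))" by (rule minB[OF r1 r2' r3'])
  then have "n \<le> card (dfa_states D) - 1" unfolding r4 .
  moreover have ne: "dfa_states D \<noteq> {}" using p(1) by blast
  then have "card (dfa_states D) \<noteq> 0" using fin by simp
  ultimately have "n + 1 \<le> card (dfa_states D)" by linarith
  then show ?thesis unfolding D(4) .
qed

end
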